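(* Let $G$ be a plane graph whose set of vertices has no accumulation point in $\mathbb{R}^2$ and which has bounded vertex degrees. If $G$ is hyperbolic, then the lengths of its geodetic cycles are bounded, i.e. $\sup\{|C| : C \text{ a geodetic cycle of } G\}<\infty$.
   Context: A plane graph is a graph with a fixed embedding in $\mathbb{R}^2$ with no two edges crossing. For a cycle $C$ and vertices $x,y$ on $C$, $xCy$ and $yCx$ denote the two arcs of $C$ joining $x$ and $y$. A geodetic cycle is a cycle $C$ such that for every two vertices $x,y\in C$ at least one of $xCy$, $yCx$ is a geodesic in $G$ (a path whose length equals the graph distance between its endpoints). A geodetic triangle consists of three vertices and three geodesics (sides) joining them pairwise; it is $\delta$-thin if each side lies in the $\delta$-neighbourhood of the union of the other two. A connected graph is $\delta$-hyperbolic if every geodetic triangle is $\delta$-thin; a graph is hyperbolic if there is $\delta\ge0$ such that each connected component is $\delta$-hyperbolic. *)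

theory Defs
  imports "HOL-Analysis.Analysis"
begin

definition graph :: "'v set \<Rightarrow> ('v \<Rightarrow> 'v \<Rightarrow> bool) \<Rightarrow> bool" where
  "graph V E \<longleftrightarrow> (\<forall>u v. E u v \<longrightarrow> u \<in> V \<and> v \<in> V \<and> u \<noteq> v \<and> E v u)"

definition plane_graph ::
  "'v set \<Rightarrow> ('v \<Rightarrow> 'v \<Rightarrow> bool) \<Rightarrow> ('v \<Rightarrow> real^2) \<Rightarrow> ('v \<Rightarrow> 'v \<Rightarrow> real \<Rightarrow> real^2) \<Rightarrow> bool" where
  "plane_graph V E p c \<longleftrightarrow>
     graph V E \<and> inj_on p V \<and>
     (\<forall>u v. E u v \<longrightarrow> arc (c u v) \<and> pathstart (c u v) = p u \<and> pathfinish (c u v) = p v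
              \<and> path_image (c v u) = path_image (c u v)) \<and>
     (\<forall>u v w. E u v \<and> w \<in> V \<and> w \<noteq> u \<and> w \<noteq> v \<longrightarrow> p w \<notin> path_image (c u v)) \<and>
     (\<forall>u v x y. E u v \<and> E x y \<and> {u, v} \<noteq> {x, y} \<longrightarrow>
        path_image (c u v) \<inter> path_image (c x y) \<subseteq> p ` ({u, v} \<inter> {x, y}))"

definition no_accumulation :: "'v set \<Rightarrow> ('v \<Rightarrow> real^2) \<Rightarrow> bool" where
  "no_accumulation V p \<longleftrightarrow> (\<forall>z. \<not> z islimpt (p ` V))"

definition bounded_degree :: "'v set \<Rightarrow> ('v \<Rightarrow> 'v \<Rightarrow> bool) \<Rightarrow> bool" where
  "bounded_degree V E \<longleftrightarrow> (\<exists>D::nat. \<forall>v\<in>V. finite {u. E v u} \<and> card {u. E v u} \<le> D)"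

definition walk :: "'v set \<Rightarrow> ('v \<Rightarrow> 'v \<Rightarrow> bool) \<Rightarrow> 'v list \<Rightarrow> bool" where
  "walk V E xs \<longleftrightarrow> xs \<noteq> [] \<and> set xs \<subseteq> V \<and> (\<forall>i. Suc i < length xs \<longrightarrow> E (xs ! i) (xs ! Suc i))"

definition gpath :: "'v set \<Rightarrow> ('v \<Rightarrow> 'v \<Rightarrow> bool) \<Rightarrow> 'v list \<Rightarrow> bool" where
  "gpath V E xs \<longleftrightarrow> walk V E xs \<and> distinct xs"

definition wlen :: "'v list \<Rightarrow> nat" where
  "wlen xs = length xs - 1"

text \<open>Graph distance (only meaningful for vertices in the same component).\<close>
definition gdist :: "'v set \<Rightarrow> ('v \<Rightarrow> 'v \<Rightarrow> bool) \<Rightarrow> 'v \<Rightarrow> 'v \<Rightarrow> nat" where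
  "gdist V E x y = (LEAST n. \<exists>xs. walk V E xs \<and> hd xs = x \<and> last xs = y \<and> wlen xs = n)"

definition geodesic :: "'v set \<Rightarrow> ('v \<Rightarrow> 'v \<Rightarrow> bool) \<Rightarrow> 'v list \<Rightarrow> bool" where
  "geodesic V E xs \<longleftrightarrow> gpath V E xs \<and> wlen xs = gdist V E (hd xs) (last xs)"

text \<open>Its length |C| is the number of its vertices
(= number of its edges). cyc_arc C i j is the arc of C from C!i to C!j going forward.\<close>

definition gcycle :: "'v set \<Rightarrow> ('v \<Rightarrow> 'v \<Rightarrow> bool) \<Rightarrow> 'v list \<Rightarrow> bool" where
  "gcycle V E cs \<longleftrightarrow> length cs \<ge> 3 \<and> gpath V E cs \<and> E (last cs) (hd cs)"

definition cyc_arc :: "'v list \<Rightarrow> nat \<Rightarrow> nat \<Rightarrow> 'v list" where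
  "cyc_arc cs i j = map (\<lambda>k. cs ! ((i + k) mod length cs))
                        [0..<(j + length cs - i) mod length cs + 1]"

definition geodetic_cycle :: "'v set \<Rightarrow> ('v \<Rightarrow> 'v \<Rightarrow> bool) \<Rightarrow> 'v list \<Rightarrow> bool" where
  "geodetic_cycle V E cs \<longleftrightarrow> gcycle V E cs \<and>
     (\<forall>i j. i < length cs \<and> j < length cs \<longrightarrow>
        geodesic V E (cyc_arc cs i j) \<or> geodesic V E (cyc_arc cs j i))"

definition near :: "'v set \<Rightarrow> ('v \<Rightarrow> 'v \<Rightarrow> bool) \<Rightarrow> real \<Rightarrow> 'v \<Rightarrow> 'v set \<Rightarrow> bool" where
  "near V E \<delta> v S \<longleftrightarrow> (\<exists>w\<in>S. \<exists>xs. walk V E xs \<and> hd xs = v \<and> last xs = w \<and> real (wlen xs) \<le> \<delta>)"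

definition geodetic_triangle :: "'v set \<Rightarrow> ('v \<Rightarrow> 'v \<Rightarrow> bool) \<Rightarrow> 'v list \<Rightarrow> 'v list \<Rightarrow> 'v list \<Rightarrow> bool" where
  "geodetic_triangle V E P Q R \<longleftrightarrow> geodesic V E P \<and> geodesic V E Q \<and> geodesic V E R \<and>
     last P = hd Q \<and> last Q = hd R \<and> last R = hd P"

definition thin_triangle :: "'v set \<Rightarrow> ('v \<Rightarrow> 'v \<Rightarrow> bool) \<Rightarrow> real \<Rightarrow> 'v list \<Rightarrow> 'v list \<Rightarrow> 'v list \<Rightarrow> bool" where
  "thin_triangle V E \<delta> P Q R \<longleftrightarrow>
     (\<forall>v\<in>set P. near V E \<delta> v (set Q \<union> set R)) \<and>
     (\<forall>v\<in>set Q. near V E \<delta> v (set R \<union> set P)) \<and>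
     (\<forall>v\<in>set R. near V E \<delta> v (set P \<union> set Q))"

definition hyperbolic :: "'v set \<Rightarrow> ('v \<Rightarrow> 'v \<Rightarrow> bool) \<Rightarrow> bool" where
  "hyperbolic V E \<longleftrightarrow> (\<exists>\<delta>\<ge>0. \<forall>P Q R. geodetic_triangle V E P Q R \<longrightarrow> thin_triangle V E \<delta> P Q R)"

end

theory Submission
  imports Defs
begin

lemma modinj: "(i + k1) mod (n::nat) = (i + k2) mod n \<Longrightarrow> k1 < n \<Longrightarrow> k2 < n \<Longrightarrow> k1 = k2"
proof (induction k1 k2 rule: linorder_wlog)
  case (le a b)
  then have "n dvd (i+b) - (i+a)" using mod_eq_dvd_iff_nat[of "i+a" "i+b" n] by simp
  then have d: "n dvd b - a" by simp
  show ?case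
  proof (rule ccontr)
    assume "a \<noteq> b"
    then have "b - a > 0" using le by simp
    then have "n \<le> b - a" using d dvd_imp_le by blast
    then show False using le by simp
  qed
next
  case (sym a b) then show ?case by metis
qed

lemma walk_rev:
  assumes g: "graph V E" and w: "walk V E xs"
  shows "walk V E (rev xs)"
  unfolding walk_def
proof (intro conjI allI impI)
  show "rev xs \<noteq> []" "set (rev xs) \<subseteq> V" using w unfolding walk_def by auto
next
  fix i assume i: "Suc i < length (rev xs)"
  let ?l = "length xs"
  have "E (xs ! (?l - 2 - i)) (xs ! Suc (?l - 2 - i))"
    using w i unfolding walk_def by simp
  moreover have "Suc (?l - 2 - i) = ?l - 1 - i" using i by simp
  ultimately have "E (xs ! (?l - 1 - i)) (xs ! (?l - 2 - i))" using g unfolding graph_def by metis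
  moreover have "rev xs ! i = xs ! (?l - 1 - i)" "rev xs ! Suc i = xs ! (?l - 2 - i)"
    using i by (simp_all add: rev_nth)
  ultimately show "E (rev xs ! i) (rev xs ! Suc i)" by simp
qed

lemma gdist_sym:
  assumes g: "graph V E"
  shows "gdist V E x y = gdist V E y x"
proof -
  have *: "\<And>x y n. (\<exists>xs. walk V E xs \<and> hd xs = x \<and> last xs = y \<and> wlen xs = n) \<Longrightarrow>
     (\<exists>xs. walk V E xs \<and> hd xs = y \<and> last xs = x \<and> wlen xs = n)"
  proof -
    fix x y n assume "\<exists>xs. walk V E xs \<and> hd xs = x \<and> last xs = y \<and> wlen xs = n"
    then obtain xs where "walk V E xs" "hd xs = x" "last xs = y" "wlen xs = n" by blast
    moreover have "xs \<noteq> []" using \<open>walk V E xs\<close> unfolding walk_def by simp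
    ultimately show "\<exists>xs. walk V E xs \<and> hd xs = y \<and> last xs = x \<and> wlen xs = n"
      by (intro exI[of _ "rev xs"]) (simp add: walk_rev[OF g] hd_rev last_rev wlen_def)
  qed
  have "(\<lambda>n. \<exists>xs. walk V E xs \<and> hd xs = x \<and> last xs = y \<and> wlen xs = n) =
        (\<lambda>n. \<exists>xs. walk V E xs \<and> hd xs = y \<and> last xs = x \<and> wlen xs = n)"
    by (rule ext) (metis *)
  then show ?thesis unfolding gdist_def by simp
qed

lemma gdist_le:
  assumes "walk V E xs"
  shows "gdist V E (hd xs) (last xs) \<le> wlen xs"
  unfolding gdist_def by (rule Least_le) (use assms in blast)

lemma cyc_step:
  assumes "gcycle V E C" "t < length C"
  shows "E (C!t) (C!(Suc t mod length C))"
proof (cases "Suc t < length C")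
  case True
  then show ?thesis using assms unfolding gcycle_def gpath_def walk_def by simp
next
  case False
  then have st: "Suc t = length C" using assms(2) by auto
  then have "t = length C - 1" "Suc t mod length C = 0" by auto
  moreover have "C \<noteq> []" using assms(2) by auto
  ultimately show ?thesis using assms(1) unfolding gcycle_def by (simp add: last_conv_nth hd_conv_nth)
qed

lemma arc_length: "length (cyc_arc C i j) = (j + length C - i) mod length C + 1"
  by (simp add: cyc_arc_def del: upt_Suc)

lemma arc_nth: "k < (j + length C - i) mod length C + 1 \<Longrightarrow> cyc_arc C i j ! k = C ! ((i+k) mod length C)"
  by (simp add: cyc_arc_def del: upt_Suc)

lemma arc_walk:
  assumes "gcycle V E C"
  shows "walk V E (cyc_arc C i j)"
proof -
  have n: "length C > 0" using assms unfolding gcycle_def by auto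
  have V: "set C \<subseteq> V" using assms unfolding gcycle_def gpath_def walk_def by auto
  show ?thesis unfolding walk_def
  proof (intro conjI allI impI)
    show "cyc_arc C i j \<noteq> []" by (simp add: cyc_arc_def del: upt_Suc)
    show "set (cyc_arc C i j) \<subseteq> V" using V n by (auto simp: cyc_arc_def del: upt_Suc)
  next
    fix k assume "Suc k < length (cyc_arc C i j)"
    then have k: "Suc k < (j + length C - i) mod length C + 1" by (simp add: arc_length)
    have "E (C!((i+k) mod length C)) (C!(Suc ((i+k) mod length C) mod length C))"
      using cyc_step[OF assms(1)] n by simp
    moreover have "Suc ((i+k) mod length C) mod length C = (i + Suc k) mod length C"
      by (simp add: mod_Suc_eq)
    ultimately show "E (cyc_arc C i j ! k) (cyc_arc C i j ! Suc k)" using k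
      by (simp add: arc_nth)
  qed
qed

lemma arc_distinct:
  assumes "gcycle V E C"
  shows "distinct (cyc_arc C i j)"
proof -
  have n: "length C > 0" and d: "distinct C" using assms unfolding gcycle_def gpath_def by auto
  have "inj_on (\<lambda>k. C ! ((i + k) mod length C)) (set [0..<(j + length C - i) mod length C + 1])"
  proof (rule inj_onI)
    fix a b assume a: "a \<in> set [0..<(j + length C - i) mod length C + 1]"
      and b: "b \<in> set [0..<(j + length C - i) mod length C + 1]"
      and e: "C ! ((i + a) mod length C) = C ! ((i + b) mod length C)"
    have "(j + length C - i) mod length C < length C" using n by simp
    then have "a < length C" "b < length C" using a b by auto
    moreover have "(i + a) mod length C = (i + b) mod length C"
      using e d n nth_eq_iff_index_eq by fastforce
    ultimately show "a = b" using modinj by blast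
  qed
  then show ?thesis unfolding cyc_arc_def by (simp add: distinct_map del: upt_Suc)
qed

lemma arc_hd: "i < length C \<Longrightarrow> hd (cyc_arc C i j) = C ! i"
  by (simp add: cyc_arc_def hd_map del: upt_Suc)

lemma arc_last:
  assumes "i < length C" "j < length C"
  shows "last (cyc_arc C i j) = C ! j"
proof -
  have "last (cyc_arc C i j) = C ! ((i + (j + length C - i) mod length C) mod length C)"
    by (simp add: cyc_arc_def last_map del: upt_Suc)
  also have "(i + (j + length C - i) mod length C) mod length C = (i + (j + length C - i)) mod length C"
    by (simp add: mod_add_right_eq)
  also have "i + (j + length C - i) = j + length C" using assms by simp
  also have "(j + length C) mod length C = j" using assms by simp
  finally show ?thesis .
qed

lemma arc_wlen: "wlen (cyc_arc C i j) = (j + length C - i) mod length C"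
  by (simp add: wlen_def arc_length)

lemma arc_set: "x \<in> set (cyc_arc C i j) \<longleftrightarrow> (\<exists>k \<le> (j + length C - i) mod length C. x = C ! ((i+k) mod length C))"
proof -
  have "set (cyc_arc C i j) = (\<lambda>k. C ! ((i+k) mod length C)) ` {0..<(j + length C - i) mod length C + 1}"
    unfolding cyc_arc_def by (simp only: set_map set_upt)
  then show ?thesis by (auto simp: less_Suc_eq_le)
qed


lemma geo_dist:
  assumes gc: "geodetic_cycle V E C" and g: "graph V E" and i: "i < length C" and j: "j < length C"
  shows "gdist V E (C!i) (C!j) \<le> (j + length C - i) mod length C"
    and "gdist V E (C!i) (C!j) \<le> (i + length C - j) mod length C"
    and "gdist V E (C!i) (C!j) = (j + length C - i) mod length C \<or> gdist V E (C!i) (C!j) = (i + length C - j) mod length C"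
proof -
  have cyc: "gcycle V E C" using gc unfolding geodetic_cycle_def by simp
  show 1: "gdist V E (C!i) (C!j) \<le> (j + length C - i) mod length C"
    using gdist_le[OF arc_walk[OF cyc, of i j]] arc_hd[OF i] arc_last[OF i j] arc_wlen by metis
  have "gdist V E (C!j) (C!i) \<le> (i + length C - j) mod length C"
    using gdist_le[OF arc_walk[OF cyc, of j i]] arc_hd[OF j] arc_last[OF j i] arc_wlen by metis
  then show "gdist V E (C!i) (C!j) \<le> (i + length C - j) mod length C" using gdist_sym[OF g] by metis
  have "geodesic V E (cyc_arc C i j) \<or> geodesic V E (cyc_arc C j i)"
    using gc i j unfolding geodetic_cycle_def by blast
  then show "gdist V E (C!i) (C!j) = (j + length C - i) mod length C \<or> gdist V E (C!i) (C!j) = (i + length C - j) mod length C"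
    unfolding geodesic_def using arc_hd[OF i] arc_last[OF i j] arc_hd[OF j] arc_last[OF j i] arc_wlen gdist_sym[OF g]
    by metis
qed

lemma short_geodesic:
  assumes gc: "geodetic_cycle V E C" and g: "graph V E" and i: "i < length C" and j: "j < length C"
    and le: "(j + length C - i) mod length C \<le> (i + length C - j) mod length C"
  shows "geodesic V E (cyc_arc C i j)"
proof -
  have cyc: "gcycle V E C" using gc unfolding geodetic_cycle_def by simp
  have "gdist V E (C!i) (C!j) = (j + length C - i) mod length C"
    using geo_dist[OF gc g i j] le by linarith
  then show ?thesis unfolding geodesic_def gpath_def
    using arc_walk[OF cyc] arc_distinct[OF cyc] arc_hd[OF i] arc_last[OF i j] arc_wlen by metis
qed

theorem lemma3p1:
  fixes V :: "'v set" and E :: "'v \<Rightarrow> 'v \<Rightarrow> bool"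
    and p :: "'v \<Rightarrow> real^2" and c :: "'v \<Rightarrow> 'v \<Rightarrow> real \<Rightarrow> real^2"
  assumes "plane_graph V E p c"
    and "no_accumulation V p"
    and "bounded_degree V E"
    and "hyperbolic V E"
  shows "\<exists>B::nat. \<forall>C. geodetic_cycle V E C \<longrightarrow> length C \<le> B"
proof -
  have g: "graph V E" using assms(1) unfolding plane_graph_def by simp
  obtain \<delta> where "\<delta> \<ge> 0" and thin: "\<And>P Q R. geodetic_triangle V E P Q R \<Longrightarrow> thin_triangle V E \<delta> P Q R"
    using assms(4) unfolding hyperbolic_def by blast
  define K where "K = nat (ceiling \<delta>)"
  have dK: "\<delta> \<le> real K" unfolding K_def by (rule real_nat_ceiling_ge)
  show ?thesis
  proof (intro exI allI impI)
    fix C assume gc: "geodetic_cycle V E C"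
    show "length C \<le> 6 * K + 6"
    proof (rule ccontr)
      assume "\<not> length C \<le> 6 * K + 6"
      define n where "n = length C"
      have nB: "n \<ge> 6 * K + 7" using \<open>\<not> length C \<le> 6 * K + 6\<close> n_def by simp
      define a where "a = n div 3"
      define b where "b = 2 * n div 3"
      define m where "m = a div 2"
      have ab: "0 < m" "m < a" "a < b" "b < n" "a \<le> n - a" "b - a \<le> n - (b - a)" "n - b \<le> b" "K + 1 \<le> m"
        using nB unfolding a_def b_def m_def by linarith+
      have L1: "(a + n - 0) mod n = a" "(0 + n - a) mod n = n - a" using ab by simp_all
      have e: "b + n - a = (b - a) + n" using ab by simp
      have L2: "(b + n - a) mod n = b - a" unfolding e mod_add_self2 using ab by simp
      have L2': "(a + n - b) mod n = n - (b - a)" using ab by simp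
      note L2 = L2 L2'
      have L3: "(0 + n - b) mod n = n - b" "(b + n - 0) mod n = b" using ab by simp_all
      note sg = short_geodesic[OF gc g, unfolded n_def[symmetric]]
      define P where "P = cyc_arc C 0 a"
      define Q where "Q = cyc_arc C a b"
      define R where "R = cyc_arc C b 0"
      have gP: "geodesic V E P" unfolding P_def using sg[of 0 a] ab L1 by simp
      have gQ: "geodesic V E Q" unfolding Q_def using sg[of a b] ab L2 by simp
      have gR: "geodesic V E R" unfolding R_def using sg[of b 0] ab L3 by simp
      have Cne: "C \<noteq> []" using ab n_def by auto
      have "last P = hd Q" "last Q = hd R" "last R = hd P"
        unfolding P_def Q_def R_def
        using arc_hd[of a C] arc_hd[of b C] arc_hd[of 0 C] arc_last[of 0 C a] arc_last[of a C b] arc_last[of b C 0] ab n_def Cne by simp_all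
      then have "geodetic_triangle V E P Q R" unfolding geodetic_triangle_def using gP gQ gR by simp
      then have th: "thin_triangle V E \<delta> P Q R" by (rule thin)
      have "C ! m \<in> set P" unfolding P_def arc_set n_def[symmetric] L1
        using ab by (intro exI[of _ m]) simp
      then have "near V E \<delta> (C!m) (set Q \<union> set R)" using th unfolding thin_triangle_def by blast
      then obtain w xs where w: "w \<in> set Q \<union> set R" and xs: "walk V E xs" "hd xs = C!m" "last xs = w"
        "real (wlen xs) \<le> \<delta>" unfolding near_def by blast
      obtain t where t: "t < n" "a \<le> t \<or> t = 0" "w = C ! t"
      proof (cases "w \<in> set Q")
        case True
        then obtain k where "k \<le> b - a" "w = C ! ((a + k) mod n)"
          unfolding Q_def arc_set n_def[symmetric] L2 by blast
        then show ?thesis using that[of "a + k"] ab by simp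
      next
        case False
        then have "w \<in> set R" using w by simp
        then obtain k where k: "k \<le> n - b" "w = C ! ((b + k) mod n)"
          unfolding R_def arc_set n_def[symmetric] L3 by blast
        show ?thesis
        proof (cases "b + k < n")
          case True then show ?thesis using that[of "b + k"] ab k by simp
        next
          case False
          then have "b + k = n" using k ab by simp
          then show ?thesis using that[of 0] ab k by simp
        qed
      qed
      have mn: "m < n" using ab by simp
      have gd: "gdist V E (C!m) (C!t) \<le> wlen xs" using gdist_le[OF xs(1)] xs t by simp
      have Ls: "(t + n - m) mod n \<ge> m \<and> (m + n - t) mod n \<ge> m"
      proof (cases "t = 0")
        case True then show ?thesis using ab by simp
      next
        case False
        then have at: "a \<le> t" using t by simp
        have e1: "t + n - m = (t - m) + n" using at ab by simp
        have e2: "(m + n - t) mod n = m + n - t" using at ab t by simp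
        have m2: "2 * m \<le> a" unfolding m_def by simp
        have "m \<le> t - m" "m \<le> m + n - t" using m2 at t by linarith+
        then show ?thesis unfolding e1 mod_add_self2 e2 using at ab t by simp
      qed
      have "m \<le> gdist V E (C!m) (C!t)" using geo_dist(3)[OF gc g, of m t] mn t Ls n_def by auto
      then have "real m \<le> \<delta>" using gd xs(4) by linarith
      then show False using ab dK by linarith
    qed
  qed
qed

end
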